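(* Let $m\subseteq\{a\}^*\times\{a,b,\#\}^*$ be the relation $\{(a^n,w\#w)\mid n\ge0,\ w\in\{a,b\}^*,\ |w|=n\}$. Then $m$ is not realized by any (nondeterministic) two-way generalized sequential machine.
   Context: A 2gsm is $M=(Q,\Sigma_1,\Sigma_2,\delta,q_{in},q_f)$ with finite state set $Q$ and finite instruction set $\delta$ of instructions $(p,\sigma,q_1,\alpha_1,\epsilon_1,q_0,\alpha_0,\epsilon_0)$, $p\in Q\setminus\{q_f\}$, $\sigma\in\Sigma_1\cup\{\vdash,\dashv\}$, $q_i\in Q$, $\alpha_i\in\Sigma_2^*$, $\epsilon_i\in\{-1,0,+1\}$. On input $w$ the read-only tape contains $\vdash w\dashv$ at positions $0,\dots,|w|+1$; the machine starts in $q_{in}$ at position $0$. In state $p$ it may execute any instruction starting with $p$: if the scanned symbol is $\sigma$ it enters $q_1$, appends $\alpha_1$ to the one-way output tape and moves by $\epsilon_1$, otherwise it does so with $(q_0,\alpha_0,\epsilon_0)$; the head may not leave the tape. $M$ realizes the relation of all $(w,z)$ for which some computation reaches $q_f$ having written $z$. *)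

theory Defs
  imports Main
begin

datatype 'c tsym = LEnd | REnd | Sym 'c

type_synonym ('q, 'c) instr = "'q \<times> 'c tsym \<times> 'q \<times> 'c list \<times> int \<times> 'q \<times> 'c list \<times> int"

type_synonym ('q, 'c) gsm2 = "'q set \<times> 'c set \<times> 'c set \<times> ('q, 'c) instr set \<times> 'q \<times> 'q"

definition is_gsm2 :: "('q, 'c) gsm2 \<Rightarrow> bool" where
  "is_gsm2 M = (case M of (Q, S1, S2, \<delta>, qin, qf) \<Rightarrow>
     finite Q \<and> finite S1 \<and> finite S2 \<and> finite \<delta> \<and> qin \<in> Q \<and> qf \<in> Q \<and>
     (\<forall>(p, \<sigma>, q1, \<alpha>1, e1, q0, \<alpha>0, e0) \<in> \<delta>.
        p \<in> Q - {qf} \<and> \<sigma> \<in> Sym ` S1 \<union> {LEnd, REnd} \<and>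
        q1 \<in> Q \<and> set \<alpha>1 \<subseteq> S2 \<and> e1 \<in> {-1, 0, 1} \<and>
        q0 \<in> Q \<and> set \<alpha>0 \<subseteq> S2 \<and> e0 \<in> {-1, 0, 1}))"

definition tape :: "'c list \<Rightarrow> int \<Rightarrow> 'c tsym" where
  "tape w i = (if i = 0 then LEnd else if i = int (length w) + 1 then REnd
               else Sym (w ! nat (i - 1)))"

text \<open>One computation step on input w between configurations (state, head position, output so far).
  A move that would leave the tape is not possible.\<close>
definition step :: "('q, 'c) gsm2 \<Rightarrow> 'c list \<Rightarrow> ('q \<times> int \<times> 'c list) \<Rightarrow> ('q \<times> int \<times> 'c list) \<Rightarrow> bool" where
  "step M w c c' = (case M of (Q, S1, S2, \<delta>, qin, qf) \<Rightarrow>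
     (case c of (p, i, z) \<Rightarrow>
       (\<exists>\<sigma> q1 \<alpha>1 e1 q0 \<alpha>0 e0. (p, \<sigma>, q1, \<alpha>1, e1, q0, \<alpha>0, e0) \<in> \<delta> \<and>
          (if tape w i = \<sigma> then c' = (q1, i + e1, z @ \<alpha>1) else c' = (q0, i + e0, z @ \<alpha>0)) \<and>
          0 \<le> fst (snd c') \<and> fst (snd c') \<le> int (length w) + 1)))"

definition realized :: "('q, 'c) gsm2 \<Rightarrow> ('c list \<times> 'c list) set" where
  "realized M = (case M of (Q, S1, S2, \<delta>, qin, qf) \<Rightarrow>
     {(w, z). set w \<subseteq> S1 \<and> (\<exists>i. (step M w)\<^sup>*\<^sup>* (qin, 0, []) (qf, i, z))})"

definition rel_m :: "'c \<Rightarrow> 'c \<Rightarrow> 'c \<Rightarrow> ('c list \<times> 'c list) set" where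
  "rel_m a b h = {(replicate n a, w @ [h] @ w) | n w. set w \<subseteq> {a, b} \<and> length w = n}"

end

theory Submission
  imports Defs
begin

definition Lm :: "('q, 'c) instr set \<Rightarrow> nat" where
  "Lm \<delta> = Max (insert 0 ((\<lambda>(p,\<sigma>,q1,\<alpha>1,e1,q0,\<alpha>0,e0). max (length \<alpha>1) (length \<alpha>0)) ` \<delta>))"

lemma Lm_ge:
  assumes "finite \<delta>" "(p,\<sigma>,q1,\<alpha>1,e1,q0,\<alpha>0,e0) \<in> \<delta>"
  shows "length \<alpha>1 \<le> Lm \<delta>" "length \<alpha>0 \<le> Lm \<delta>"
proof -
  have "max (length \<alpha>1) (length \<alpha>0) \<in> insert 0 ((\<lambda>(p,\<sigma>,q1,\<alpha>1,e1,q0,\<alpha>0,e0). max (length \<alpha>1) (length \<alpha>0)) ` \<delta>)"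
    using assms(2) by force
  then have "max (length \<alpha>1) (length \<alpha>0) \<le> Lm \<delta>"
    unfolding Lm_def using assms(1) by (intro Max_ge) auto
  then show "length \<alpha>1 \<le> Lm \<delta>" "length \<alpha>0 \<le> Lm \<delta>" by auto
qed

lemma step_ext:
  assumes g: "is_gsm2 (Q,S1,S2,\<delta>,qin,qf)"
    and s: "step (Q,S1,S2,\<delta>,qin,qf) w (p,i,z) (q,j,z')"
  shows "\<exists>\<alpha>. z' = z @ \<alpha> \<and> length \<alpha> \<le> Lm \<delta> \<and> q \<in> Q \<and> 0 \<le> j \<and> j \<le> int (length w) + 1 \<and>
          (\<forall>z0. step (Q,S1,S2,\<delta>,qin,qf) w (p,i,z0) (q,j,z0 @ \<alpha>))"
proof -
  from s obtain \<sigma> q1 \<alpha>1 e1 q0 \<alpha>0 e0 where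
    I: "(p, \<sigma>, q1, \<alpha>1, e1, q0, \<alpha>0, e0) \<in> \<delta>" and
    C: "(if tape w i = \<sigma> then (q,j,z') = (q1, i + e1, z @ \<alpha>1) else (q,j,z') = (q0, i + e0, z @ \<alpha>0))" and
    B: "0 \<le> j" "j \<le> int (length w) + 1"
    unfolding step_def by auto
  have fin: "finite \<delta>" using g unfolding is_gsm2_def by auto
  have Qs: "q1 \<in> Q" "q0 \<in> Q" using g I unfolding is_gsm2_def by fastforce+
  note L = Lm_ge[OF fin I]
  show ?thesis
  proof (cases "tape w i = \<sigma>")
    case True
    then have e: "q = q1" "j = i + e1" "z' = z @ \<alpha>1" using C by auto
    show ?thesis
    proof (intro exI[of _ \<alpha>1] conjI allI)
      fix z0
      show "step (Q,S1,S2,\<delta>,qin,qf) w (p,i,z0) (q,j,z0 @ \<alpha>1)"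
        unfolding step_def prod.case
        apply (rule exI[of _ \<sigma>], rule exI[of _ q1], rule exI[of _ \<alpha>1], rule exI[of _ e1],
          rule exI[of _ q0], rule exI[of _ \<alpha>0], rule exI[of _ e0])
        using e B True I by auto
    qed (use e L Qs B in auto)
  next
    case False
    then have e: "q = q0" "j = i + e0" "z' = z @ \<alpha>0" using C by auto
    show ?thesis
    proof (intro exI[of _ \<alpha>0] conjI allI)
      fix z0
      show "step (Q,S1,S2,\<delta>,qin,qf) w (p,i,z0) (q,j,z0 @ \<alpha>0)"
        unfolding step_def prod.case
        apply (rule exI[of _ \<sigma>], rule exI[of _ q1], rule exI[of _ \<alpha>1], rule exI[of _ e1],
          rule exI[of _ q0], rule exI[of _ \<alpha>0], rule exI[of _ e0])
        using e B False I by auto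
    qed (use e L Qs B in auto)
  qed
qed

lemma steps_ext:
  assumes g: "is_gsm2 (Q,S1,S2,\<delta>,qin,qf)"
    and r: "(step (Q,S1,S2,\<delta>,qin,qf) w)\<^sup>*\<^sup>* c c'"
  shows "\<exists>y. snd (snd c') = snd (snd c) @ y \<and>
     (\<forall>z0. (step (Q,S1,S2,\<delta>,qin,qf) w)\<^sup>*\<^sup>* (fst c, fst (snd c), z0) (fst c', fst (snd c'), z0 @ y))"
  using r
proof (induction rule: rtranclp_induct)
  case base
  then show ?case by (intro exI[of _ "[]"]) auto
next
  case (step c1 c2)
  from step.IH obtain y where y: "snd (snd c1) = snd (snd c) @ y"
    "\<forall>z0. (step (Q,S1,S2,\<delta>,qin,qf) w)\<^sup>*\<^sup>* (fst c, fst (snd c), z0) (fst c1, fst (snd c1), z0 @ y)"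
    by blast
  obtain p i z where c1: "c1 = (p,i,z)" by (cases c1) auto
  obtain q j z' where c2: "c2 = (q,j,z')" by (cases c2) auto
  from step_ext[OF g step.hyps(2)[unfolded c1 c2]] obtain \<alpha> where
    a: "z' = z @ \<alpha>" "\<forall>z0. step (Q,S1,S2,\<delta>,qin,qf) w (p,i,z0) (q,j,z0 @ \<alpha>)" by blast
  show ?case
  proof (intro exI[of _ "y @ \<alpha>"] conjI allI)
    show "snd (snd c2) = snd (snd c) @ y @ \<alpha>" using y(1) a(1) c1 c2 by simp
  next
    fix z0
    have "(step (Q,S1,S2,\<delta>,qin,qf) w)\<^sup>*\<^sup>* (fst c, fst (snd c), z0) (p, i, z0 @ y)"
      using y(2) c1 by auto
    moreover have "step (Q,S1,S2,\<delta>,qin,qf) w (p, i, z0 @ y) (q, j, (z0 @ y) @ \<alpha>)"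
      using a(2) by blast
    ultimately show "(step (Q,S1,S2,\<delta>,qin,qf) w)\<^sup>*\<^sup>* (fst c, fst (snd c), z0) (fst c2, fst (snd c2), z0 @ y @ \<alpha>)"
      using c2 by (simp add: rtranclp.rtrancl_into_rtrancl)
  qed
qed

lemma reach_inv:
  assumes g: "is_gsm2 (Q,S1,S2,\<delta>,qin,qf)"
    and r: "(step (Q,S1,S2,\<delta>,qin,qf) w)\<^sup>*\<^sup>* (qin, 0, []) c"
  shows "fst c \<in> Q \<and> 0 \<le> fst (snd c) \<and> fst (snd c) \<le> int (length w) + 1"
  using r
proof (induction rule: rtranclp_induct)
  case base
  then show ?case using g unfolding is_gsm2_def by auto
next
  case (step c1 c2)
  obtain p i z where c1: "c1 = (p,i,z)" by (cases c1) auto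
  obtain q j z' where c2: "c2 = (q,j,z')" by (cases c2) auto
  from step_ext[OF g step.hyps(2)[unfolded c1 c2]] show ?case using c2 by auto
qed

lemma crossing:
  assumes g: "is_gsm2 (Q,S1,S2,\<delta>,qin,qf)"
    and r: "(step (Q,S1,S2,\<delta>,qin,qf) w)\<^sup>*\<^sup>* c cf"
  shows "length (snd (snd c)) \<le> n \<Longrightarrow> n < length (snd (snd cf)) \<Longrightarrow>
     \<exists>c'. (step (Q,S1,S2,\<delta>,qin,qf) w)\<^sup>*\<^sup>* c c' \<and> (step (Q,S1,S2,\<delta>,qin,qf) w)\<^sup>*\<^sup>* c' cf \<and>
        n < length (snd (snd c')) \<and> length (snd (snd c')) \<le> n + Lm \<delta>"
  using r
proof (induction rule: converse_rtranclp_induct)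
  case base
  then show ?case by simp
next
  case (step c c1)
  obtain p i z where c: "c = (p,i,z)" by (cases c) auto
  obtain q j z' where c1: "c1 = (q,j,z')" by (cases c1) auto
  from step_ext[OF g step.hyps(1)[unfolded c c1]] obtain \<alpha> where
    a: "z' = z @ \<alpha>" "length \<alpha> \<le> Lm \<delta>" by blast
  show ?case
  proof (cases "n < length (snd (snd c1))")
    case True
    then show ?thesis
      apply (intro exI[of _ c1])
      using step.hyps step.prems a c c1 by auto
  next
    case False
    then obtain c' where "(step (Q,S1,S2,\<delta>,qin,qf) w)\<^sup>*\<^sup>* c1 c'" "(step (Q,S1,S2,\<delta>,qin,qf) w)\<^sup>*\<^sup>* c' cf"
        "n < length (snd (snd c'))" "length (snd (snd c')) \<le> n + Lm \<delta>"
      using step.IH step.prems by auto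
    then show ?thesis
      using step.hyps(1) by (meson converse_rtranclp_into_rtranclp)
  qed
qed

lemma exp_beats: "\<exists>n::nat. A * (n + 2) < 2 ^ n"
proof -
  have "Suc A \<le> 2 ^ A" by (simp add: Suc_leI)
  then have "Suc A * Suc A \<le> 2 ^ A * 2 ^ A" by (intro mult_le_mono) auto
  then have h: "Suc A * Suc A \<le> 2 ^ (2 * A)" by (simp add: power_add mult_2)
  have "A * (2 * A + 4 + 2) < 4 * (Suc A * Suc A)" by (simp add: algebra_simps)
  also have "\<dots> \<le> 4 * 2 ^ (2 * A)" using h by simp
  also have "\<dots> = 2 ^ (2 * A + 2)" by (simp add: power_add)
  finally have "A * ((2 * A + 2) + 2) < 2 ^ (2 * A + 2)" by (simp add: algebra_simps)
  then show ?thesis by blast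
qed

theorem lemma5p2:
  fixes a b h :: 'c
  assumes "distinct [a, b, h]"
  shows "\<not> (\<exists>M :: ('q, 'c) gsm2. is_gsm2 M \<and> realized M = rel_m a b h)"
proof
  assume "\<exists>M :: ('q, 'c) gsm2. is_gsm2 M \<and> realized M = rel_m a b h"
  then obtain Q S1 S2 \<delta> qin qf where g: "is_gsm2 ((Q,S1,S2,\<delta>,qin,qf) :: ('q, 'c) gsm2)"
    and r: "realized (Q,S1,S2,\<delta>,qin,qf) = rel_m a b h" by auto
  define M where "M = ((Q,S1,S2,\<delta>,qin,qf) :: ('q, 'c) gsm2)"
  define L where "L = Lm \<delta>"
  define V where "V = {v. set v \<subseteq> {a,b} \<and> length v \<le> L}"
  have fQ: "finite Q" using g unfolding is_gsm2_def by auto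
  have fV: "finite V" unfolding V_def by (rule finite_lists_length_le) simp
  have ab: "a \<noteq> b" "h \<noteq> a" "h \<noteq> b" using assms by auto
  have real_iff: "\<And>x z. (x, z) \<in> rel_m a b h \<longleftrightarrow>
      set x \<subseteq> S1 \<and> (\<exists>i. (step M x)\<^sup>*\<^sup>* (qin, 0, []) (qf, i, z))"
  proof -
    fix x z
    have "(x, z) \<in> rel_m a b h \<longleftrightarrow> (x, z) \<in> realized M" using r M_def by simp
    then show "?thesis x z" unfolding M_def realized_def by simp
  qed
  obtain n where n: "(card Q * card V) * (n + 2) < 2 ^ n" using exp_beats by blast
  define x where "x = replicate n a"
  define W where "W = {w. set w \<subseteq> {a,b} \<and> length w = n}"
  define P where "P w k = (case k of (q,i,v) \<Rightarrow>
      (step M x)\<^sup>*\<^sup>* (qin,0,[]) (q,i,w@[h]@v) \<and> (\<exists>j. (step M x)\<^sup>*\<^sup>* (q,i,w@[h]@v) (qf,j,w@[h]@w)))" for w k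
  define K where "K = Q \<times> {0..int n+1} \<times> V"
  have inrel: "(x, w@[h]@w) \<in> rel_m a b h" if "w \<in> W" for w
    using that unfolding rel_m_def W_def x_def by auto
  have ex: "\<exists>k\<in>K. P w k" if w: "w \<in> W" for w
  proof -
    from inrel[OF w] obtain j where run: "(step M x)\<^sup>*\<^sup>* (qin, 0, []) (qf, j, w@[h]@w)"
      using real_iff[of x "w@[h]@w"] by blast
    have lw: "length w = n" using w unfolding W_def by auto
    from crossing[OF g run[unfolded M_def], of n] lw obtain c' where
      c': "(step M x)\<^sup>*\<^sup>* (qin, 0, []) c'" "(step M x)\<^sup>*\<^sup>* c' (qf, j, w@[h]@w)"
        "n < length (snd (snd c'))" "length (snd (snd c')) \<le> n + L"
      unfolding M_def L_def by auto
    obtain q i z where cq: "c' = (q,i,z)" by (cases c') auto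
    from steps_ext[OF g c'(2)[unfolded M_def]] cq obtain y where zy: "w@[h]@w = z @ y" by auto
    have "z = take (length z) (w@[h]@w)" using zy by simp
    also have "\<dots> = w @ take (length z - n) (h # w)" using lw c'(3) cq by simp
    also have "\<dots> = w @ [h] @ take (length z - Suc n) w"
    proof -
      have "length z - n = Suc (length z - Suc n)" using c'(3) cq by simp
      then show ?thesis by simp
    qed
    finally have zz: "z = w @ [h] @ take (length z - Suc n) w" .
    define v where "v = take (length z - Suc n) w"
    have vV: "v \<in> V" unfolding V_def v_def using w c'(4) cq set_take_subset[of _ w]
      unfolding W_def by auto
    from reach_inv[OF g c'(1)[unfolded M_def]] cq have qi: "q \<in> Q" "0 \<le> i" "i \<le> int n + 1"
      by (auto simp: x_def)
    show ?thesis
      apply (rule bexI[of _ "(q,i,v)"])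
      using c' cq zz vV qi unfolding P_def K_def v_def by auto
  qed
  have uniq: "w = w'" if w: "w \<in> W" and w': "w' \<in> W" and P1: "P w k" and P2: "P w' k" for w w' k
  proof -
    obtain q i v where k: "k = (q,i,v)" by (cases k) auto
    from P1 k have run1: "(step M x)\<^sup>*\<^sup>* (qin,0,[]) (q,i,w@[h]@v)" unfolding P_def by auto
    from P2 k obtain j where run2: "(step M x)\<^sup>*\<^sup>* (q,i,w'@[h]@v) (qf,j,w'@[h]@w')"
      unfolding P_def by auto
    have "\<exists>y. w'@[h]@w' = (w'@[h]@v) @ y \<and> (\<forall>z0. (step M x)\<^sup>*\<^sup>* (q,i,z0) (qf,j,z0 @ y))"
      using steps_ext[OF g run2[unfolded M_def]] unfolding M_def by (simp only: fst_conv snd_conv)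
    then obtain y where
      y1: "w'@[h]@w' = (w'@[h]@v) @ y" and
      y2: "\<forall>z0. (step M x)\<^sup>*\<^sup>* (q,i,z0) (qf,j,z0 @ y)" by blast
    have w'v: "w' = v @ y" using y1 by simp
    have y: "(step M x)\<^sup>*\<^sup>* (q,i,w@[h]@v) (qf,j,(w@[h]@v) @ y)" using y2 by blast
    have "(step M x)\<^sup>*\<^sup>* (qin,0,[]) (qf,j,w@[h]@w')"
      using rtranclp_trans[OF run1 y] w'v by simp
    moreover have "set x \<subseteq> S1" using real_iff[of x "w@[h]@w"] inrel[OF w] by blast
    ultimately have "(x, w@[h]@w') \<in> rel_m a b h" using real_iff[of x "w@[h]@w'"] by blast
    then obtain u where u: "w@[h]@w' = u@[h]@u" "set u \<subseteq> {a,b}" unfolding rel_m_def by auto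
    have "h \<notin> set w" "h \<notin> set w'" using w w' ab unfolding W_def by auto
    then have "w = u \<and> w' = u" using u(1) append_Cons_eq_iff[of h w w' u u] by simp
    then show ?thesis by simp
  qed
  define f where "f w = (SOME k. k \<in> K \<and> P w k)" for w
  have fP: "f w \<in> K \<and> P w (f w)" if "w \<in> W" for w
    unfolding f_def using ex[OF that] by (metis (mono_tags, lifting) someI_ex)
  have "inj_on f W" proof (rule inj_onI)
    fix w w' assume "w \<in> W" "w' \<in> W" "f w = f w'"
    then show "w = w'" using fP[of w] fP[of w'] uniq[of w w' "f w"] by simp
  qed
  moreover have "f ` W \<subseteq> K" using fP by auto
  moreover have "finite K" unfolding K_def using fQ fV by auto
  ultimately have "card W \<le> card K" by (rule card_inj_on_le)
  moreover have "card W = 2 ^ n" unfolding W_def using card_lists_length_eq[of "{a,b}" n] ab by (simp add: numeral_2_eq_2)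
  moreover have "card K = card Q * (n + 2) * card V"
  proof -
    have "card {0..int n+1} = n + 2" by simp
    then show ?thesis unfolding K_def card_cartesian_product by (simp add: algebra_simps)
  qed
  ultimately show False using n by (simp add: algebra_simps)
qed

end
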